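(* Let $G=(V,E)$ be a (finite or infinite) graph, and let $L=\{L_v:v\in V\}\cup\{L_e:e\in E\}$ be a set of lists of positive integers such that $|L_v|\geq 2$ for every vertex $v$ and $|L_e|\geq 3$ for every edge $e$. Then there exists an $L$-weighting of $G$.
   Context: Graphs are simple and may be infinite. Each list is a finite subset of $\{1,\dots,k\}$ for some natural number $k$. A weighting of $G$ from $L$ is a function $\omega\colon V\cup E\to\mathbb{Z}_{>0}$ with $\omega(v)\in L_v$ for all $v\in V$ and $\omega(e)\in L_e$ for all $e\in E$. The weighted degree of a vertex $v$ is $s_\omega(v)=\sum_{w\in N(v)}\omega(vw)+\omega(v)$; if $v$ has infinite degree $\kappa$ this sum is the cardinal $\kappa$ (equal to the degree of $v$). An $L$-weighting of $G$ is a weighting $\omega$ from $L$ such that for every edge $uv$ of $G$, either $s_\omega(u)\neq s_\omega(v)$, or $u$ and $v$ have the same infinite degree. *)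

theory Defs
  imports Main "HOL-Library.Equipollence"
begin

definition simple_graph :: "'a set \<Rightarrow> 'a set set \<Rightarrow> bool" where
  "simple_graph V E \<longleftrightarrow> (\<forall>e\<in>E. \<exists>u v. u \<in> V \<and> v \<in> V \<and> u \<noteq> v \<and> e = {u, v})"

definition nbhd :: "'a set set \<Rightarrow> 'a \<Rightarrow> 'a set" where
  "nbhd E v = {w. {v, w} \<in> E}"

definition wdeg_fin :: "'a set set \<Rightarrow> ('a \<Rightarrow> nat) \<Rightarrow> ('a set \<Rightarrow> nat) \<Rightarrow> 'a \<Rightarrow> nat" where
  "wdeg_fin E wv we v = (\<Sum>w\<in>nbhd E v. we {v, w}) + wv v"

text \<open>The weighted degree s(v) is the natural number wdeg_fin if v has finite degree,
  and the cardinal |N(v)| otherwise. Cardinals are compared via equipollence;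
  a natural number never equals an infinite cardinal.\<close>
definition wdeg_differ :: "'a set set \<Rightarrow> ('a \<Rightarrow> nat) \<Rightarrow> ('a set \<Rightarrow> nat) \<Rightarrow> 'a \<Rightarrow> 'a \<Rightarrow> bool" where
  "wdeg_differ E wv we u v =
     (if finite (nbhd E u) \<and> finite (nbhd E v) then wdeg_fin E wv we u \<noteq> wdeg_fin E wv we v
      else if finite (nbhd E u) \<or> finite (nbhd E v) then True
      else \<not> (nbhd E u \<approx> nbhd E v))"

definition same_infinite_degree :: "'a set set \<Rightarrow> 'a \<Rightarrow> 'a \<Rightarrow> bool" where
  "same_infinite_degree E u v \<longleftrightarrow>
     infinite (nbhd E u) \<and> infinite (nbhd E v) \<and> nbhd E u \<approx> nbhd E v"

definition is_L_weighting ::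
  "'a set \<Rightarrow> 'a set set \<Rightarrow> ('a \<Rightarrow> nat set) \<Rightarrow> ('a set \<Rightarrow> nat set)
   \<Rightarrow> ('a \<Rightarrow> nat) \<Rightarrow> ('a set \<Rightarrow> nat) \<Rightarrow> bool" where
  "is_L_weighting V E Lv Le wv we \<longleftrightarrow>
     (\<forall>v\<in>V. wv v \<in> Lv v) \<and> (\<forall>e\<in>E. we e \<in> Le e) \<and>
     (\<forall>u v. {u, v} \<in> E \<longrightarrow> wdeg_differ E wv we u v \<or> same_infinite_degree E u v)"

end

theory Submission
  imports Defs Complex_Main "HOL-Library.FuncSet" "HOL-Combinatorics.Permutations" "HOL-Analysis.Function_Topology"
begin

definition lagw :: "real set \<Rightarrow> real \<Rightarrow> real" where
  "lagw A a = inverse (\<Prod>b\<in>A-{a}. a - b)"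

definition Ssum :: "real set \<Rightarrow> nat \<Rightarrow> real" where
  "Ssum A k = (\<Sum>a\<in>A. a^k * lagw A a)"

lemma lagw_remove:
  assumes "finite A" "c \<in> A" "a \<in> A" "a \<noteq> c"
  shows "(a - c) * lagw A a = lagw (A - {c}) a"
proof -
  have "A - {a} = insert c (A - {c} - {a})" using assms by auto
  hence "(\<Prod>b\<in>A-{a}. a - b) = (a - c) * (\<Prod>b\<in>A-{c}-{a}. a - b)"
    using assms by simp
  thus ?thesis using assms unfolding lagw_def by (simp add: field_simps)
qed

lemma Ssum_rec:
  assumes "finite A" "c \<in> A"
  shows "Ssum A (Suc k) = c * Ssum A k + Ssum (A - {c}) k"
proof -
  have "Ssum A (Suc k) - c * Ssum A k = (\<Sum>a\<in>A. a^k * ((a - c) * lagw A a))"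
    unfolding Ssum_def by (simp add: sum_distrib_left sum_subtractf[symmetric] algebra_simps)
  also have "\<dots> = (\<Sum>a\<in>A-{c}. a^k * ((a - c) * lagw A a))"
    using assms by (simp add: sum.remove)
  also have "\<dots> = (\<Sum>a\<in>A-{c}. a^k * lagw (A-{c}) a)"
    using assms by (intro sum.cong) (auto simp: lagw_remove)
  finally show ?thesis unfolding Ssum_def by simp
qed

lemma Ssum_main:
  "\<forall>A. finite A \<and> card A = Suc n \<longrightarrow> (\<forall>k\<le>n. Ssum A k = (if k = n then 1 else 0))"
proof (induction n)
  case 0
  show ?case
  proof (intro allI impI)
    fix A :: "real set" and k :: nat assume "finite A \<and> card A = Suc 0" "k \<le> 0"
    then obtain a where "A = {a}" by (auto simp: card_Suc_eq)
    thus "Ssum A k = (if k = 0 then 1 else 0)" using \<open>k \<le> 0\<close> by (simp add: Ssum_def lagw_def)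
  qed
next
  case (Suc n)
  show ?case
  proof (rule allI, rule impI)
    fix A :: "real set" assume A: "finite A \<and> card A = Suc (Suc n)"
    then obtain c d where cd: "c \<in> A" "d \<in> A" "c \<noteq> d"
      by (metis card_2_iff' card_le_Suc_iff le_add1 plus_1_eq_Suc subset_iff_psubset_eq
           psubset_card_mono card_Suc_eq insertI1 insert_iff)
    have cardc: "card (A - {c}) = Suc n" and cardd: "card (A - {d}) = Suc n"
      using A cd by auto
    have IHc: "\<forall>k\<le>n. Ssum (A-{c}) k = (if k = n then 1 else 0)" using Suc A cardc by auto
    have IHd: "\<forall>k\<le>n. Ssum (A-{d}) k = (if k = n then 1 else 0)" using Suc A cardd by auto
    have "c * Ssum A 0 + Ssum (A - {c}) 0 = d * Ssum A 0 + Ssum (A - {d}) 0"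
      using Ssum_rec[of A c 0] Ssum_rec[of A d 0] A cd by simp
    hence "(c - d) * Ssum A 0 = 0" using IHc IHd by (simp add: algebra_simps)
    hence S0: "Ssum A 0 = 0" using cd by simp
    have "\<And>k. k \<le> Suc n \<Longrightarrow> Ssum A k = (if k = Suc n then 1 else 0)"
    proof -
      fix k :: nat
      show "k \<le> Suc n \<Longrightarrow> Ssum A k = (if k = Suc n then 1 else 0)"
      proof (induction k)
        case 0 thus ?case using S0 by simp
      next
        case (Suc k)
        have "Ssum A k = 0" using Suc by simp
        moreover have "Ssum (A - {c}) k = (if k = n then 1 else 0)" using IHc Suc by simp
        ultimately show ?case using Ssum_rec[of A c k] A cd by simp
      qed
    qed
    thus "\<forall>k\<le>Suc n. Ssum A k = (if k = Suc n then 1 else 0)" by blast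
  qed
qed

lemma Ssum_eval:
  assumes "finite A" "card A = Suc n" "k \<le> n"
  shows "Ssum A k = (if k = n then 1 else 0)"
  using Ssum_main[of n] assms by blast

definition fib :: "'r set \<Rightarrow> ('r \<Rightarrow> 'z) \<Rightarrow> 'z \<Rightarrow> nat" where
  "fib R \<sigma> z = card {r\<in>R. \<sigma> r = z}"

lemma prod_fiber:
  fixes g :: "'z \<Rightarrow> 'c::comm_monoid_mult"
  assumes "finite R" "finite Z" "\<sigma> ` R \<subseteq> Z"
  shows "(\<Prod>r\<in>R. g (\<sigma> r)) = (\<Prod>z\<in>Z. g z ^ fib R \<sigma> z)"
proof -
  have "(\<Prod>r\<in>R. g (\<sigma> r)) = (\<Prod>z\<in>Z. \<Prod>r\<in>{r. r\<in>R \<and> \<sigma> r = z}. g (\<sigma> r))"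
    using prod.group[OF assms, of "\<lambda>r. g (\<sigma> r)"] by simp
  also have "\<dots> = (\<Prod>z\<in>Z. g z ^ fib R \<sigma> z)"
    by (intro prod.cong refl) (simp add: fib_def)
  finally show ?thesis .
qed

lemma sum_fib:
  assumes "finite R" "finite Z" "\<sigma> ` R \<subseteq> Z"
  shows "(\<Sum>z\<in>Z. fib R \<sigma> z) = card R"
proof -
  have "(\<Sum>z\<in>Z. \<Sum>r\<in>{r. r\<in>R \<and> \<sigma> r = z}. (1::nat)) = (\<Sum>r\<in>R. 1)"
    using sum.group[OF assms, of "\<lambda>r. 1::nat"] by simp
  thus ?thesis by (simp add: fib_def)
qed

lemma sum_PiE_prod:
  fixes h :: "'z \<Rightarrow> real \<Rightarrow> real"
  assumes "finite Z" "\<And>z. z \<in> Z \<Longrightarrow> finite (G z)"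
  shows "(\<Sum>x\<in>PiE Z G. \<Prod>z\<in>Z. h z (x z)) = (\<Prod>z\<in>Z. \<Sum>a\<in>G z. h z a)"
  using prod_sum_PiE[OF assms, where f=h] by simp

lemma grid_identity:
  fixes a :: "'r \<Rightarrow> 'z \<Rightarrow> real" and G :: "'z \<Rightarrow> real set" and \<eta> :: "'z \<Rightarrow> nat"
  assumes R: "finite R" and Z: "finite Z"
    and G: "\<And>z. z \<in> Z \<Longrightarrow> finite (G z) \<and> card (G z) = Suc (\<eta> z)"
    and eta: "(\<Sum>z\<in>Z. \<eta> z) = card R"
  shows "(\<Sum>x\<in>PiE Z G. (\<Prod>r\<in>R. \<Sum>z\<in>Z. a r z * x z) * (\<Prod>z\<in>Z. lagw (G z) (x z)))
       = (\<Sum>\<sigma>\<in>{\<sigma>\<in>PiE R (\<lambda>_. Z). \<forall>z\<in>Z. fib R \<sigma> z = \<eta> z}. \<Prod>r\<in>R. a r (\<sigma> r))"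
proof -
  let ?S = "PiE R (\<lambda>_. Z)"
  have finS: "finite ?S" using R Z by (simp add: finite_PiE)
  have finG: "finite (PiE Z G)" using Z G by (simp add: finite_PiE)
  have exp: "(\<Prod>r\<in>R. \<Sum>z\<in>Z. a r z * x z) =
        (\<Sum>\<sigma>\<in>?S. (\<Prod>r\<in>R. a r (\<sigma> r)) * (\<Prod>z\<in>Z. x z ^ fib R \<sigma> z))" for x
  proof -
    have "(\<Prod>r\<in>R. \<Sum>z\<in>Z. a r z * x z) = (\<Sum>\<sigma>\<in>?S. \<Prod>r\<in>R. a r (\<sigma> r) * x (\<sigma> r))"
      using prod_sum_PiE[OF R, of "\<lambda>_. Z" "\<lambda>r z. a r z * x z"] Z by simp
    also have "\<dots> = (\<Sum>\<sigma>\<in>?S. (\<Prod>r\<in>R. a r (\<sigma> r)) * (\<Prod>z\<in>Z. x z ^ fib R \<sigma> z))"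
    proof (intro sum.cong refl)
      fix \<sigma> assume s: "\<sigma> \<in> ?S"
      hence "\<sigma> ` R \<subseteq> Z" by (auto simp: PiE_def Pi_def)
      thus "(\<Prod>r\<in>R. a r (\<sigma> r) * x (\<sigma> r)) = (\<Prod>r\<in>R. a r (\<sigma> r)) * (\<Prod>z\<in>Z. x z ^ fib R \<sigma> z)"
        using prod_fiber[OF R Z, of \<sigma> x] by (simp add: prod.distrib)
    qed
    finally show ?thesis .
  qed
  have inner: "(\<Sum>x\<in>PiE Z G. (\<Prod>z\<in>Z. x z ^ fib R \<sigma> z) * (\<Prod>z\<in>Z. lagw (G z) (x z)))
      = (if \<forall>z\<in>Z. fib R \<sigma> z = \<eta> z then 1 else 0)" if s: "\<sigma> \<in> ?S" for \<sigma>
  proof -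
    have "(\<Sum>x\<in>PiE Z G. (\<Prod>z\<in>Z. x z ^ fib R \<sigma> z) * (\<Prod>z\<in>Z. lagw (G z) (x z)))
        = (\<Sum>x\<in>PiE Z G. \<Prod>z\<in>Z. x z ^ fib R \<sigma> z * lagw (G z) (x z))"
      by (simp add: prod.distrib)
    also have "\<dots> = (\<Prod>z\<in>Z. \<Sum>b\<in>G z. b ^ fib R \<sigma> z * lagw (G z) b)"
      using sum_PiE_prod[OF Z, of G "\<lambda>z b. b ^ fib R \<sigma> z * lagw (G z) b"] G by simp
    also have "\<dots> = (\<Prod>z\<in>Z. Ssum (G z) (fib R \<sigma> z))" by (simp add: Ssum_def)
    also have "\<dots> = (if \<forall>z\<in>Z. fib R \<sigma> z = \<eta> z then 1 else 0)"
    proof (cases "\<forall>z\<in>Z. fib R \<sigma> z = \<eta> z")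
      case True
      hence "\<And>z. z \<in> Z \<Longrightarrow> Ssum (G z) (fib R \<sigma> z) = 1"
        using G Ssum_eval by simp
      thus ?thesis using True by simp
    next
      case False
      have sr: "\<sigma> ` R \<subseteq> Z" using s by (auto simp: PiE_def Pi_def)
      have sumeq: "(\<Sum>z\<in>Z. \<eta> z) = (\<Sum>z\<in>Z. fib R \<sigma> z)" using sum_fib[OF R Z sr] eta by simp
      have "\<exists>z\<in>Z. fib R \<sigma> z < \<eta> z"
      proof (rule ccontr)
        assume "\<not> (\<exists>z\<in>Z. fib R \<sigma> z < \<eta> z)"
        hence le: "\<And>z. z \<in> Z \<Longrightarrow> \<eta> z \<le> fib R \<sigma> z" by force
        have "\<forall>z\<in>Z. \<eta> z = fib R \<sigma> z"
          using sum_mono_inv[OF sumeq le _ Z] by blast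
        thus False using False by auto
      qed
      then obtain z where z: "z \<in> Z" "fib R \<sigma> z < \<eta> z" by blast
      hence "Ssum (G z) (fib R \<sigma> z) = 0" using G[OF z(1)] Ssum_eval[of "G z" "\<eta> z" "fib R \<sigma> z"] by simp
      hence "(\<Prod>z\<in>Z. Ssum (G z) (fib R \<sigma> z)) = 0" using z Z by (intro prod_zero) auto
      thus ?thesis using False by simp
    qed
    finally show ?thesis .
  qed
  have "(\<Sum>x\<in>PiE Z G. (\<Prod>r\<in>R. \<Sum>z\<in>Z. a r z * x z) * (\<Prod>z\<in>Z. lagw (G z) (x z)))
      = (\<Sum>x\<in>PiE Z G. \<Sum>\<sigma>\<in>?S. (\<Prod>r\<in>R. a r (\<sigma> r)) *
            ((\<Prod>z\<in>Z. x z ^ fib R \<sigma> z) * (\<Prod>z\<in>Z. lagw (G z) (x z))))"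
    by (simp add: exp sum_distrib_right mult.assoc)
  also have "\<dots> = (\<Sum>\<sigma>\<in>?S. \<Sum>x\<in>PiE Z G. (\<Prod>r\<in>R. a r (\<sigma> r)) *
            ((\<Prod>z\<in>Z. x z ^ fib R \<sigma> z) * (\<Prod>z\<in>Z. lagw (G z) (x z))))"
    by (rule sum.swap)
  also have "\<dots> = (\<Sum>\<sigma>\<in>?S. (\<Prod>r\<in>R. a r (\<sigma> r)) * (if \<forall>z\<in>Z. fib R \<sigma> z = \<eta> z then 1 else 0))"
    by (intro sum.cong refl) (simp add: sum_distrib_left[symmetric] inner)
  also have "\<dots> = (\<Sum>\<sigma>\<in>{\<sigma>\<in>?S. \<forall>z\<in>Z. fib R \<sigma> z = \<eta> z}. \<Prod>r\<in>R. a r (\<sigma> r))"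
    using finS by (subst sum.inter_filter) (auto intro!: sum.cong)
  finally show ?thesis .
qed

definition Wt :: "'r set \<Rightarrow> ('z \<Rightarrow> 'r \<Rightarrow> real) \<Rightarrow> ('r \<Rightarrow> 'z) \<Rightarrow> real" where
  "Wt R lam \<sigma> = (\<Sum>\<pi>\<in>{\<pi>. \<pi> permutes R}. \<Prod>r\<in>R. lam (\<sigma> r) (\<pi> r))"

lemma fiber_perm:
  assumes R: "finite R" and fe: "fib R \<sigma> = fib R \<sigma>'"
  obtains \<tau> where "\<tau> permutes R" "\<And>r. r \<in> R \<Longrightarrow> \<sigma>' r = \<sigma> (\<tau> r)"
proof -
  have "\<forall>z. \<exists>h. bij_betw h {r\<in>R. \<sigma>' r = z} {r\<in>R. \<sigma> r = z}"
  proof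
    fix z
    have "card {r\<in>R. \<sigma>' r = z} = card {r\<in>R. \<sigma> r = z}"
      using fun_cong[OF fe, of z] unfolding fib_def by simp
    thus "\<exists>h. bij_betw h {r\<in>R. \<sigma>' r = z} {r\<in>R. \<sigma> r = z}"
      using R by (intro finite_same_card_bij) auto
  qed
  then obtain b where b: "\<And>z. bij_betw (b z) {r\<in>R. \<sigma>' r = z} {r\<in>R. \<sigma> r = z}" by metis
  define \<tau> where "\<tau> r = (if r \<in> R then b (\<sigma>' r) r else r)" for r
  have img: "\<tau> r \<in> R \<and> \<sigma> (\<tau> r) = \<sigma>' r" if "r \<in> R" for r
  proof -
    have "b (\<sigma>' r) r \<in> {r'\<in>R. \<sigma> r' = \<sigma>' r}"
      using bij_betw_apply[OF b[of "\<sigma>' r"]] that by auto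
    thus ?thesis using that by (simp add: \<tau>_def)
  qed
  have inj: "inj_on \<tau> R"
  proof (rule inj_onI)
    fix r1 r2 assume r: "r1 \<in> R" "r2 \<in> R" "\<tau> r1 = \<tau> r2"
    hence z: "\<sigma>' r1 = \<sigma>' r2" using img by metis
    have "b (\<sigma>' r1) r1 = b (\<sigma>' r1) r2" using r z by (simp add: \<tau>_def)
    moreover have "inj_on (b (\<sigma>' r1)) {r\<in>R. \<sigma>' r = \<sigma>' r1}"
      using b bij_betw_imp_inj_on by blast
    ultimately show "r1 = r2" using r z by (auto dest: inj_onD)
  qed
  have "\<tau> ` R = R" using endo_inj_surj[OF R _ inj] img by auto
  hence "bij_betw \<tau> R R" using inj by (simp add: bij_betw_def)
  hence "\<tau> permutes R" by (rule bij_imp_permutes) (simp add: \<tau>_def)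
  thus ?thesis using that img by metis
qed

lemma Wt_inv:
  assumes R: "finite R" and fe: "fib R \<sigma> = fib R \<sigma>'"
  shows "Wt R lam \<sigma>' = Wt R lam \<sigma>"
proof -
  obtain \<tau> where t: "\<tau> permutes R" "\<And>r. r \<in> R \<Longrightarrow> \<sigma>' r = \<sigma> (\<tau> r)"
    using fiber_perm[OF R fe] by metis
  have "Wt R lam \<sigma>' = (\<Sum>\<pi>\<in>{\<pi>. \<pi> permutes R}. \<Prod>r\<in>R. lam (\<sigma> (\<tau> r)) (\<pi> r))"
    unfolding Wt_def using t by (intro sum.cong refl prod.cong) auto
  also have "\<dots> = (\<Sum>\<pi>\<in>{\<pi>. \<pi> permutes R}. \<Prod>r\<in>R. lam (\<sigma> (\<tau> r)) ((\<pi> \<circ> \<tau>) r))"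
    by (rule sum_permutations_compose_right[OF t(1)])
  also have "\<dots> = (\<Sum>\<pi>\<in>{\<pi>. \<pi> permutes R}. \<Prod>s\<in>R. lam (\<sigma> s) (\<pi> s))"
  proof (intro sum.cong refl)
    fix \<pi>
    have "(\<Prod>s\<in>\<tau> ` R. lam (\<sigma> s) (\<pi> s)) = (\<Prod>r\<in>R. lam (\<sigma> (\<tau> r)) (\<pi> (\<tau> r)))"
      using prod.reindex[OF permutes_inj_on[OF t(1)]] by (simp add: o_def)
    thus "(\<Prod>r\<in>R. lam (\<sigma> (\<tau> r)) ((\<pi> \<circ> \<tau>) r)) = (\<Prod>s\<in>R. lam (\<sigma> s) (\<pi> s))"
      using permutes_image[OF t(1)] by simp
  qed
  finally show ?thesis unfolding Wt_def .
qed

lemma Wt_zero: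
  assumes R: "finite R" and z: "card {j\<in>R. lam z j \<noteq> 0} < fib R \<sigma> z"
  shows "Wt R lam \<sigma> = 0"
  unfolding Wt_def
proof (intro sum.neutral ballI)
  fix \<pi> assume "\<pi> \<in> {\<pi>. \<pi> permutes R}"
  hence p: "\<pi> permutes R" by simp
  let ?F = "{r\<in>R. \<sigma> r = z}"
  have "card (\<pi> ` ?F) = card ?F"
    using permutes_inj_on[OF p] by (intro card_image) (auto intro: inj_on_subset)
  have "\<not> (\<pi> ` ?F \<subseteq> {j\<in>R. lam z j \<noteq> 0})"
  proof
    assume "\<pi> ` ?F \<subseteq> {j\<in>R. lam z j \<noteq> 0}"
    hence "card (\<pi> ` ?F) \<le> card {j\<in>R. lam z j \<noteq> 0}" using R by (intro card_mono) auto
    thus False using z \<open>card (\<pi> ` ?F) = card ?F\<close> unfolding fib_def by simp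
  qed
  then obtain r where r: "r \<in> R" "\<sigma> r = z" "lam z (\<pi> r) = 0"
    using permutes_in_image[OF p] by auto
  show "(\<Prod>r\<in>R. lam (\<sigma> r) (\<pi> r)) = 0"
    using r R by (intro prod_zero) auto
qed

lemma perm_chain:
  fixes A :: "'r \<Rightarrow> 'z \<Rightarrow> real" and lam :: "'z \<Rightarrow> 'r \<Rightarrow> real"
    and L :: "'z \<Rightarrow> real set" and bnd :: "'z \<Rightarrow> nat"
  assumes R: "finite R" and Z: "finite Z"
    and supp: "\<And>z. z \<in> Z \<Longrightarrow> card {j\<in>R. lam z j \<noteq> 0} \<le> bnd z"
    and L: "\<And>z. z \<in> Z \<Longrightarrow> finite (L z) \<and> Suc (bnd z) \<le> card (L z)"
    and van: "\<And>x. x \<in> PiE Z L \<Longrightarrow> (\<Prod>r\<in>R. \<Sum>z\<in>Z. A r z * x z) = 0"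
  shows "(\<Sum>\<pi>\<in>{\<pi>. \<pi> permutes R}. \<Prod>r\<in>R. \<Sum>z\<in>Z. A r z * lam z (\<pi> r)) = 0"
proof -
  let ?S = "PiE R (\<lambda>_. Z)"
  let ?P = "{\<pi>. \<pi> permutes R}"
  define C where "C \<sigma> = (\<Prod>r\<in>R. A r (\<sigma> r))" for \<sigma>
  have finS: "finite ?S" using R Z by (simp add: finite_PiE)
  have finP: "finite ?P" using R by (simp add: finite_permutations)
  have "(\<Sum>\<pi>\<in>?P. \<Prod>r\<in>R. \<Sum>z\<in>Z. A r z * lam z (\<pi> r))
      = (\<Sum>\<pi>\<in>?P. \<Sum>\<sigma>\<in>?S. \<Prod>r\<in>R. A r (\<sigma> r) * lam (\<sigma> r) (\<pi> r))"
    using prod_sum_PiE[OF R, of "\<lambda>_. Z"] Z by (intro sum.cong refl) simp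
  also have "\<dots> = (\<Sum>\<sigma>\<in>?S. \<Sum>\<pi>\<in>?P. C \<sigma> * (\<Prod>r\<in>R. lam (\<sigma> r) (\<pi> r)))"
    by (subst sum.swap) (simp add: C_def prod.distrib)
  also have "\<dots> = (\<Sum>\<sigma>\<in>?S. C \<sigma> * Wt R lam \<sigma>)"
    by (simp add: Wt_def sum_distrib_left)
  also have "\<dots> = (\<Sum>\<eta>\<in>fib R ` ?S. \<Sum>\<sigma>\<in>{\<sigma>. \<sigma> \<in> ?S \<and> fib R \<sigma> = \<eta>}. C \<sigma> * Wt R lam \<sigma>)"
    using sum.group[OF finS finite_imageI[OF finS], where g="fib R" and h="\<lambda>\<sigma>. C \<sigma> * Wt R lam \<sigma>"] by simp
  also have "\<dots> = 0"
  proof (rule sum.neutral, rule ballI)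
    fix \<eta> assume "\<eta> \<in> fib R ` ?S"
    then obtain \<sigma>0 where s0: "\<sigma>0 \<in> ?S" "\<eta> = fib R \<sigma>0" by blast
    have s0Z: "\<sigma>0 ` R \<subseteq> Z" using s0 by (auto simp: PiE_def Pi_def)
    show "(\<Sum>\<sigma>\<in>{\<sigma>. \<sigma> \<in> ?S \<and> fib R \<sigma> = \<eta>}. C \<sigma> * Wt R lam \<sigma>) = 0"
    proof (cases "\<exists>z\<in>Z. bnd z < \<eta> z")
      case True
      then obtain z where z: "z \<in> Z" "bnd z < \<eta> z" by blast
      show ?thesis
      proof (intro sum.neutral ballI)
        fix \<sigma> assume "\<sigma> \<in> {\<sigma>. \<sigma> \<in> ?S \<and> fib R \<sigma> = \<eta>}"
        hence "fib R \<sigma> z = \<eta> z" by simp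
        hence "Wt R lam \<sigma> = 0" using Wt_zero[OF R, of lam z \<sigma>] supp[OF z(1)] z by simp
        thus "C \<sigma> * Wt R lam \<sigma> = 0" by simp
      qed
    next
      case False
      hence bd: "\<And>z. z \<in> Z \<Longrightarrow> \<eta> z \<le> bnd z" by force
      have "\<forall>z\<in>Z. \<exists>T. T \<subseteq> L z \<and> card T = Suc (\<eta> z) \<and> finite T"
      proof
        fix z assume z: "z \<in> Z"
        have "Suc (\<eta> z) \<le> card (L z)" using L[OF z] bd[OF z] by simp
        thus "\<exists>T. T \<subseteq> L z \<and> card T = Suc (\<eta> z) \<and> finite T"
          by (meson obtain_subset_with_card_n)
      qed
      then obtain G where G: "\<And>z. z \<in> Z \<Longrightarrow> G z \<subseteq> L z \<and> card (G z) = Suc (\<eta> z) \<and> finite (G z)"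
        by metis
      have eta: "(\<Sum>z\<in>Z. \<eta> z) = card R" using sum_fib[OF R Z s0Z] s0 by simp
      have gid: "(\<Sum>x\<in>PiE Z G. (\<Prod>r\<in>R. \<Sum>z\<in>Z. A r z * x z) * (\<Prod>z\<in>Z. lagw (G z) (x z)))
          = (\<Sum>\<sigma>\<in>{\<sigma>\<in>?S. \<forall>z\<in>Z. fib R \<sigma> z = \<eta> z}. C \<sigma>)"
        unfolding C_def by (rule grid_identity[OF R Z _ eta]) (simp add: G)
      have "(\<Sum>x\<in>PiE Z G. (\<Prod>r\<in>R. \<Sum>z\<in>Z. A r z * x z) * (\<Prod>z\<in>Z. lagw (G z) (x z))) = 0"
      proof (intro sum.neutral ballI)
        fix x assume "x \<in> PiE Z G"
        hence "x \<in> PiE Z L" using G by (auto simp: PiE_def Pi_def)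
        thus "(\<Prod>r\<in>R. \<Sum>z\<in>Z. A r z * x z) * (\<Prod>z\<in>Z. lagw (G z) (x z)) = 0" using van by simp
      qed
      hence csum: "(\<Sum>\<sigma>\<in>{\<sigma>\<in>?S. \<forall>z\<in>Z. fib R \<sigma> z = \<eta> z}. C \<sigma>) = 0" using gid by simp
      have cls: "{\<sigma>. \<sigma> \<in> ?S \<and> fib R \<sigma> = \<eta>} = {\<sigma>\<in>?S. \<forall>z\<in>Z. fib R \<sigma> z = \<eta> z}"
      proof (intro set_eqI iffI)
        fix \<sigma> assume "\<sigma> \<in> {\<sigma>\<in>?S. \<forall>z\<in>Z. fib R \<sigma> z = \<eta> z}"
        hence s: "\<sigma> \<in> ?S" "\<forall>z\<in>Z. fib R \<sigma> z = \<eta> z" by auto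
        have "fib R \<sigma> z = \<eta> z" for z
        proof (cases "z \<in> Z")
          case True thus ?thesis using s by simp
        next
          case False
          have "{r\<in>R. \<sigma> r = z} = {}" "{r\<in>R. \<sigma>0 r = z} = {}"
            using s(1) s0(1) False by (auto simp: PiE_def Pi_def)
          thus ?thesis using s0 unfolding fib_def by (metis (no_types, lifting))
        qed
        thus "\<sigma> \<in> {\<sigma>. \<sigma> \<in> ?S \<and> fib R \<sigma> = \<eta>}" using s by auto
      qed auto
      have "(\<Sum>\<sigma>\<in>{\<sigma>. \<sigma> \<in> ?S \<and> fib R \<sigma> = \<eta>}. C \<sigma> * Wt R lam \<sigma>)
          = (\<Sum>\<sigma>\<in>{\<sigma>. \<sigma> \<in> ?S \<and> fib R \<sigma> = \<eta>}. C \<sigma> * Wt R lam \<sigma>0)"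
      proof (intro sum.cong refl)
        fix \<sigma> assume "\<sigma> \<in> {\<sigma>. \<sigma> \<in> ?S \<and> fib R \<sigma> = \<eta>}"
        hence "fib R \<sigma>0 = fib R \<sigma>" using s0 by simp
        thus "C \<sigma> * Wt R lam \<sigma> = C \<sigma> * Wt R lam \<sigma>0" using Wt_inv[OF R] by metis
      qed
      also have "\<dots> = (\<Sum>\<sigma>\<in>{\<sigma>\<in>?S. \<forall>z\<in>Z. fib R \<sigma> z = \<eta> z}. C \<sigma>) * Wt R lam \<sigma>0"
        by (simp add: cls sum_distrib_right)
      also have "\<dots> = 0" using csum by simp
      finally show ?thesis .
    qed
  qed
  finally show ?thesis .
qed

locale fgraph =
  fixes V0 :: "'a set" and E0 :: "'a set set" and ord :: "'a \<Rightarrow> nat"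
  assumes finV: "finite V0" and finE: "finite E0"
    and edges: "\<And>e. e \<in> E0 \<Longrightarrow> \<exists>u v. u \<in> V0 \<and> v \<in> V0 \<and> u \<noteq> v \<and> e = {u, v}"
    and ordinj: "inj_on ord V0"
begin

definition hi :: "'a set \<Rightarrow> 'a" where
  "hi e = (SOME v. v \<in> e \<and> (\<forall>w\<in>e. ord w \<le> ord v))"
definition lo :: "'a set \<Rightarrow> 'a" where
  "lo e = (SOME v. v \<in> e \<and> v \<noteq> hi e)"

lemma edge_lohi:
  assumes e: "e \<in> E0"
  shows "lo e \<in> V0 \<and> hi e \<in> V0 \<and> e = {lo e, hi e} \<and> ord (lo e) < ord (hi e)"
proof -
  obtain u v where uv: "u \<in> V0" "v \<in> V0" "u \<noteq> v" "e = {u, v}" using edges[OF e] by blast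
  have mem: "\<And>x. x \<in> e \<longleftrightarrow> x = u \<or> x = v" using uv(4) by simp
  have ne: "ord u \<noteq> ord v" using inj_onD[OF ordinj _ uv(1) uv(2)] uv(3) by blast
  have "\<exists>v'. v' \<in> e \<and> (\<forall>w\<in>e. ord w \<le> ord v')"
  proof (cases "ord u \<le> ord v")
    case True thus ?thesis using mem by (intro exI[of _ v]) auto
  next
    case False thus ?thesis using mem by (intro exI[of _ u]) auto
  qed
  hence h: "hi e \<in> e \<and> (\<forall>w\<in>e. ord w \<le> ord (hi e))" unfolding hi_def by (rule someI_ex)
  have "\<exists>v'. v' \<in> e \<and> v' \<noteq> hi e" using mem uv(3) by metis
  hence l: "lo e \<in> e \<and> lo e \<noteq> hi e" unfolding lo_def by (rule someI_ex)
  have hu: "hi e = u \<or> hi e = v" using h mem by blast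
  have lu: "lo e = u \<or> lo e = v" using l mem by blast
  have ee: "e = {lo e, hi e}"
  proof (rule set_eqI)
    fix x show "x \<in> e \<longleftrightarrow> x \<in> {lo e, hi e}" using mem hu lu l by auto
  qed
  have inV: "lo e \<in> V0" "hi e \<in> V0" using hu lu uv(1,2) by auto
  have le: "ord (lo e) \<le> ord (hi e)" using h l by blast
  have "ord (lo e) \<noteq> ord (hi e)" using hu lu l ne by auto
  thus ?thesis using ee inV le by simp
qed

lemma lohi_eq:
  assumes "e \<in> E0" "g \<in> E0" "lo e = lo g" "hi e = hi g"
  shows "e = g"
proof -
  have "e = {lo e, hi e}" using edge_lohi[OF assms(1)] by blast
  also have "\<dots> = {lo g, hi g}" using assms(3,4) by simp
  also have "\<dots> = g" using edge_lohi[OF assms(2)] by blast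
  finally show ?thesis .
qed

definition cand :: "'a set \<Rightarrow> 'a set \<Rightarrow> bool" where
  "cand j g \<longleftrightarrow> g \<in> E0 \<and> lo g = lo j \<and> ord (hi j) < ord (hi g)"
definition hn :: "'a set \<Rightarrow> bool" where
  "hn j \<longleftrightarrow> (\<exists>g. cand j g)"
definition nxt :: "'a set \<Rightarrow> 'a set" where
  "nxt j = arg_min (\<lambda>g. ord (hi g)) (cand j)"

lemma nxt_props:
  assumes "hn j"
  shows "cand j (nxt j) \<and> (\<forall>g. cand j g \<longrightarrow> ord (hi (nxt j)) \<le> ord (hi g))"
proof -
  obtain g where "cand j g" using assms hn_def by blast
  thus ?thesis unfolding nxt_def by (rule arg_min_nat_lemma)
qed

definition pot :: "('a + 'a set) \<Rightarrow> 'a \<Rightarrow> real" where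
  "pot z v = (case z of Inl w \<Rightarrow> if v = w then 1 else 0 | Inr g \<Rightarrow> if v \<in> g then 1 else 0)"

definition Amat :: "'a set \<Rightarrow> ('a + 'a set) \<Rightarrow> real" where
  "Amat f z = pot z (hi f) - pot z (lo f)"

definition lam :: "('a + 'a set) \<Rightarrow> 'a set \<Rightarrow> real" where
  "lam z j = (case z of Inl w \<Rightarrow> if \<not> hn j \<and> w = lo j then -1 else 0
     | Inr g \<Rightarrow> (if g = j then 1 else 0) - (if hn j \<and> g = nxt j then 1 else 0))"

definition Zs :: "('a + 'a set) set" where
  "Zs = Inl ` V0 \<union> Inr ` E0"

lemma finZ: "finite Zs" using finV finE by (simp add: Zs_def)

lemma sum_pot:
  assumes v: "v \<in> V0"
  shows "(\<Sum>z\<in>Zs. pot z v * h z) = h (Inl v) + (\<Sum>g\<in>{g\<in>E0. v \<in> g}. h (Inr g))"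
proof -
  have "(\<Sum>z\<in>Zs. pot z v * h z) = (\<Sum>z\<in>Inl ` V0. pot z v * h z) + (\<Sum>z\<in>Inr ` E0. pot z v * h z)"
    unfolding Zs_def using finV finE by (intro sum.union_disjoint) auto
  also have "(\<Sum>z\<in>Inl ` V0. pot z v * h z) = (\<Sum>w\<in>V0. pot (Inl w) v * h (Inl w))"
    by (subst sum.reindex) (auto simp: inj_on_def)
  also have "\<dots> = (\<Sum>w\<in>V0. if v = w then h (Inl w) else 0)"
    by (intro sum.cong refl) (simp add: pot_def)
  also have "\<dots> = h (Inl v)" using finV v by simp
  also have "(\<Sum>z\<in>Inr ` E0. pot z v * h z) = (\<Sum>g\<in>E0. pot (Inr g) v * h (Inr g))"
    by (subst sum.reindex) (auto simp: inj_on_def)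
  also have "\<dots> = (\<Sum>g\<in>E0. if v \<in> g then h (Inr g) else 0)"
    by (intro sum.cong refl) (simp add: pot_def)
  also have "\<dots> = (\<Sum>g\<in>{g\<in>E0. v \<in> g}. h (Inr g))"
    using finE by (simp add: sum.inter_filter)
  finally show ?thesis .
qed

definition mu :: "'a set \<Rightarrow> 'a \<Rightarrow> real" where
  "mu j v = (if v = hi j then 1 else 0) - (if hn j \<and> v = hi (nxt j) then 1 else 0)"

lemma potlam:
  assumes v: "v \<in> V0" and j: "j \<in> E0"
  shows "(\<Sum>z\<in>Zs. pot z v * lam z j) = mu j v"
proof -
  have fin: "finite {g\<in>E0. v \<in> g}" using finE by simp
  have "(\<Sum>g\<in>{g\<in>E0. v \<in> g}. lam (Inr g) j)
      = (\<Sum>g\<in>{g\<in>E0. v \<in> g}. if g = j then 1 else 0) - (\<Sum>g\<in>{g\<in>E0. v \<in> g}. if hn j \<and> g = nxt j then 1 else 0)"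
    by (simp add: lam_def sum_subtractf)
  also have "\<dots> = (if v \<in> j then 1 else 0) - (if hn j \<and> v \<in> nxt j then 1 else 0)"
  proof -
    have a: "(\<Sum>g\<in>{g\<in>E0. v \<in> g}. if g = j then 1 else 0) = (if v \<in> j then 1 else (0::real))"
      using fin j by simp
    have b: "(\<Sum>g\<in>{g\<in>E0. v \<in> g}. if hn j \<and> g = nxt j then 1 else 0) = (if hn j \<and> v \<in> nxt j then 1 else (0::real))"
    proof (cases "hn j")
      case True
      hence "nxt j \<in> E0" using nxt_props cand_def by blast
      thus ?thesis using fin True by simp
    next
      case False thus ?thesis by simp
    qed
    show ?thesis using a b by simp
  qed
  finally have s: "(\<Sum>g\<in>{g\<in>E0. v \<in> g}. lam (Inr g) j) = (if v \<in> j then 1 else 0) - (if hn j \<and> v \<in> nxt j then 1 else 0)" .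
  have lj: "j = {lo j, hi j}" "ord (lo j) < ord (hi j)" using edge_lohi[OF j] by auto
  have "(v \<in> j) = (v \<in> {lo j, hi j})" using lj(1) by (rule arg_cong)
  hence vj: "v \<in> j \<longleftrightarrow> v = lo j \<or> v = hi j" by simp
  have sp: "(\<Sum>z\<in>Zs. pot z v * lam z j) = lam (Inl v) j + (\<Sum>g\<in>{g\<in>E0. v \<in> g}. lam (Inr g) j)"
    by (rule sum_pot[OF v])
  have li: "lam (Inl v) j = (if \<not> hn j \<and> v = lo j then -1 else 0)" by (simp add: lam_def)
  show ?thesis
  proof (cases "hn j")
    case True
    have c: "cand j (nxt j)" using nxt_props[OF True] by blast
    hence n: "nxt j \<in> E0" "lo (nxt j) = lo j" "ord (hi j) < ord (hi (nxt j))" by (auto simp: cand_def)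
    have "nxt j = {lo (nxt j), hi (nxt j)}" using edge_lohi[OF n(1)] by blast
    also have "\<dots> = {lo j, hi (nxt j)}" using n(2) by simp
    finally have nn: "nxt j = {lo j, hi (nxt j)}" .
    have "(v \<in> nxt j) = (v \<in> {lo j, hi (nxt j)})" using nn by (rule arg_cong)
    hence vn: "v \<in> nxt j \<longleftrightarrow> v = lo j \<or> v = hi (nxt j)" by simp
    have d1: "lo j \<noteq> hi j" "lo j \<noteq> hi (nxt j)" using lj n by auto
    have "(\<Sum>z\<in>Zs. pot z v * lam z j) = (if v \<in> j then 1 else 0) - (if v \<in> nxt j then 1 else 0)"
      using sp s li True by simp
    also have "\<dots> = mu j v" unfolding mu_def using vj vn d1 True by auto
    finally show ?thesis .
  next
    case False
    have d1: "lo j \<noteq> hi j" using lj by auto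
    have "(\<Sum>z\<in>Zs. pot z v * lam z j) = (if v = lo j then -1 else 0) + (if v \<in> j then 1 else 0)"
      using sp s li False by simp
    also have "\<dots> = mu j v" unfolding mu_def using vj d1 False by auto
    finally show ?thesis .
  qed
qed

definition Mm :: "'a set \<Rightarrow> 'a set \<Rightarrow> real" where
  "Mm f j = (\<Sum>z\<in>Zs. Amat f z * lam z j)"

lemma Mm_val:
  assumes f: "f \<in> E0" and j: "j \<in> E0"
  shows "Mm f j = mu j (hi f) - mu j (lo f)"
proof -
  have "Mm f j = (\<Sum>z\<in>Zs. pot z (hi f) * lam z j) - (\<Sum>z\<in>Zs. pot z (lo f) * lam z j)"
    unfolding Mm_def Amat_def by (simp add: left_diff_distrib sum_subtractf)
  thus ?thesis using potlam edge_lohi[OF f] j by simp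
qed

lemma Mm_zero:
  assumes f: "f \<in> E0" and j: "j \<in> E0" and lt: "ord (hi f) < ord (hi j)"
  shows "Mm f j = 0"
proof -
  have lf: "ord (lo f) < ord (hi f)" using edge_lohi[OF f] by auto
  have "hn j \<Longrightarrow> ord (hi j) < ord (hi (nxt j))" using nxt_props cand_def by blast
  hence "mu j (hi f) = 0" "mu j (lo f) = 0" using lt lf unfolding mu_def by auto
  thus ?thesis using Mm_val[OF f j] by simp
qed

lemma Mm_one:
  assumes f: "f \<in> E0" and j: "j \<in> E0" and eq: "hi f = hi j"
  shows "Mm f j = 1"
proof -
  have lf: "ord (lo f) < ord (hi f)" using edge_lohi[OF f] by auto
  have "hn j \<Longrightarrow> ord (hi j) < ord (hi (nxt j))" using nxt_props cand_def by blast
  hence "mu j (hi f) = 1" "mu j (lo f) = 0" using eq lf unfolding mu_def by auto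
  thus ?thesis using Mm_val[OF f j] by simp
qed

lemma per_pos:
  "(\<Sum>\<pi>\<in>{\<pi>. \<pi> permutes E0}. \<Prod>f\<in>E0. Mm f (\<pi> f)) \<ge> 1"
proof -
  have trm: "(\<Prod>f\<in>E0. Mm f (\<pi> f)) = (if \<forall>f\<in>E0. hi (\<pi> f) = hi f then 1 else 0)"
    if p: "\<pi> permutes E0" for \<pi>
  proof (cases "\<exists>f\<in>E0. ord (hi f) < ord (hi (\<pi> f))")
    case True
    then obtain f where f: "f \<in> E0" "ord (hi f) < ord (hi (\<pi> f))" by blast
    have pf: "\<pi> f \<in> E0" using permutes_in_image[OF p] f by simp
    have "Mm f (\<pi> f) = 0" using Mm_zero[OF f(1) pf f(2)] .
    hence "(\<Prod>f\<in>E0. Mm f (\<pi> f)) = 0" using f finE by (intro prod_zero) auto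
    moreover have "\<not> (\<forall>f\<in>E0. hi (\<pi> f) = hi f)" using f by (metis less_irrefl)
    ultimately show ?thesis by simp
  next
    case False
    hence le: "\<And>f. f \<in> E0 \<Longrightarrow> ord (hi (\<pi> f)) \<le> ord (hi f)" by force
    have "(\<Sum>f\<in>E0. ord (hi (\<pi> f))) = (\<Sum>f\<in>\<pi> ` E0. ord (hi f))"
      using sum.reindex[OF permutes_inj_on[OF p], of "\<lambda>f. ord (hi f)"] by simp
    also have "\<dots> = (\<Sum>f\<in>E0. ord (hi f))" using permutes_image[OF p] by simp
    finally have eqs: "(\<Sum>f\<in>E0. ord (hi (\<pi> f))) = (\<Sum>f\<in>E0. ord (hi f))" .
    have eqo: "\<And>f. f \<in> E0 \<Longrightarrow> ord (hi (\<pi> f)) = ord (hi f)"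
      by (rule sum_mono_inv[OF eqs le _ finE])
    have eqh: "\<And>f. f \<in> E0 \<Longrightarrow> hi (\<pi> f) = hi f"
    proof -
      fix f assume f: "f \<in> E0"
      have "\<pi> f \<in> E0" using permutes_in_image[OF p] f by simp
      hence "hi (\<pi> f) \<in> V0" using edge_lohi by blast
      moreover have "hi f \<in> V0" using edge_lohi f by blast
      ultimately show "hi (\<pi> f) = hi f" using inj_onD[OF ordinj eqo[OF f]] by blast
    qed
    have "(\<Prod>f\<in>E0. Mm f (\<pi> f)) = (\<Prod>f\<in>E0. 1)"
      using eqh permutes_in_image[OF p] by (intro prod.cong refl Mm_one) auto
    thus ?thesis using eqh by simp
  qed
  have fin: "finite {\<pi>. \<pi> permutes E0}" using finE by (simp add: finite_permutations)
  have "(1::real) = (\<Prod>f\<in>E0. Mm f (id f))" using trm[OF permutes_id] by simp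
  also have "\<dots> \<le> (\<Sum>\<pi>\<in>{\<pi>. \<pi> permutes E0}. \<Prod>f\<in>E0. Mm f (\<pi> f))"
  proof (rule member_le_sum[OF _ _ fin])
    show "id \<in> {\<pi>. \<pi> permutes E0}" by (rule CollectI, rule permutes_id)
  next
    fix \<pi> assume "\<pi> \<in> {\<pi>. \<pi> permutes E0} - {id}"
    thus "0 \<le> (\<Prod>f\<in>E0. Mm f (\<pi> f))" using trm by simp
  qed
  finally show ?thesis .
qed

lemma supp_Inl:
  "card {j\<in>E0. lam (Inl w) j \<noteq> 0} \<le> 1"
proof -
  have "\<forall>j1\<in>{j\<in>E0. lam (Inl w) j \<noteq> 0}. \<forall>j2\<in>{j\<in>E0. lam (Inl w) j \<noteq> 0}. j1 = j2"
  proof (intro ballI)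
    fix j1 j2 assume "j1 \<in> {j\<in>E0. lam (Inl w) j \<noteq> 0}" "j2 \<in> {j\<in>E0. lam (Inl w) j \<noteq> 0}"
    hence j: "j1 \<in> E0" "j2 \<in> E0" "\<not> hn j1" "\<not> hn j2" "lo j1 = w" "lo j2 = w"
      by (auto simp: lam_def split: if_splits)
    have "\<not> ord (hi j1) < ord (hi j2)" using j unfolding hn_def cand_def by auto
    moreover have "\<not> ord (hi j2) < ord (hi j1)" using j unfolding hn_def cand_def by auto
    ultimately have "ord (hi j1) = ord (hi j2)" by simp
    moreover have "hi j1 \<in> V0" "hi j2 \<in> V0" using edge_lohi j by auto
    ultimately have "hi j1 = hi j2" using inj_onD[OF ordinj] by blast
    thus "j1 = j2" using lohi_eq j by metis
  qed
  thus ?thesis using finE card_le_Suc0_iff_eq[of "{j\<in>E0. lam (Inl w) j \<noteq> 0}"] by simp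
qed

lemma supp_Inr:
  "card {j\<in>E0. lam (Inr g) j \<noteq> 0} \<le> 2"
proof -
  have sub: "{j\<in>E0. lam (Inr g) j \<noteq> 0} \<subseteq> {g} \<union> {j\<in>E0. hn j \<and> nxt j = g}"
    by (auto simp: lam_def split: if_splits)
  have "\<forall>j1\<in>{j\<in>E0. hn j \<and> nxt j = g}. \<forall>j2\<in>{j\<in>E0. hn j \<and> nxt j = g}. j1 = j2"
  proof (intro ballI)
    fix j1 j2 assume "j1 \<in> {j\<in>E0. hn j \<and> nxt j = g}" "j2 \<in> {j\<in>E0. hn j \<and> nxt j = g}"
    hence j: "j1 \<in> E0" "j2 \<in> E0" "hn j1" "hn j2" "nxt j1 = g" "nxt j2 = g" by auto
    have p1: "cand j1 g" "\<forall>h. cand j1 h \<longrightarrow> ord (hi g) \<le> ord (hi h)" using nxt_props[OF j(3)] j by auto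
    have p2: "cand j2 g" "\<forall>h. cand j2 h \<longrightarrow> ord (hi g) \<le> ord (hi h)" using nxt_props[OF j(4)] j by auto
    have lo: "lo j1 = lo j2" using p1 p2 by (simp add: cand_def)
    have "\<not> ord (hi j1) < ord (hi j2)"
    proof
      assume "ord (hi j1) < ord (hi j2)"
      hence "cand j1 j2" using j lo by (simp add: cand_def)
      hence "ord (hi g) \<le> ord (hi j2)" using p1 by blast
      thus False using p2 by (simp add: cand_def)
    qed
    moreover have "\<not> ord (hi j2) < ord (hi j1)"
    proof
      assume "ord (hi j2) < ord (hi j1)"
      hence "cand j2 j1" using j lo by (simp add: cand_def)
      hence "ord (hi g) \<le> ord (hi j1)" using p2 by blast
      thus False using p1 by (simp add: cand_def)
    qed
    ultimately have "ord (hi j1) = ord (hi j2)" by simp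
    moreover have "hi j1 \<in> V0" "hi j2 \<in> V0" using edge_lohi j by auto
    ultimately have "hi j1 = hi j2" using inj_onD[OF ordinj] by blast
    thus "j1 = j2" using lohi_eq j lo by metis
  qed
  hence c1: "card {j\<in>E0. hn j \<and> nxt j = g} \<le> 1"
    using finE card_le_Suc0_iff_eq[of "{j\<in>E0. hn j \<and> nxt j = g}"] by simp
  have "card {j\<in>E0. lam (Inr g) j \<noteq> 0} \<le> card ({g} \<union> {j\<in>E0. hn j \<and> nxt j = g})"
    using finE by (intro card_mono[OF _ sub]) auto
  also have "\<dots> \<le> card {g} + card {j\<in>E0. hn j \<and> nxt j = g}" by (rule card_Un_le)
  finally show ?thesis using c1 by simp
qed

end

context fgraph
begin

lemma exists_point:
  fixes Lv :: "'a \<Rightarrow> nat set" and Le :: "'a set \<Rightarrow> nat set"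
  assumes Lv: "\<And>v. v \<in> V0 \<Longrightarrow> finite (Lv v) \<and> 2 \<le> card (Lv v)"
    and Le: "\<And>e. e \<in> E0 \<Longrightarrow> finite (Le e) \<and> 3 \<le> card (Le e)"
  shows "\<exists>x\<in>PiE Zs (\<lambda>z. case z of Inl v \<Rightarrow> real ` Lv v | Inr e \<Rightarrow> real ` Le e).
           (\<Prod>f\<in>E0. \<Sum>z\<in>Zs. Amat f z * x z) \<noteq> 0"
proof (rule ccontr)
  let ?L = "\<lambda>z. case z of Inl v \<Rightarrow> real ` Lv v | Inr e \<Rightarrow> real ` Le e"
  let ?bnd = "\<lambda>z::'a + 'a set. case z of Inl _ \<Rightarrow> (1::nat) | Inr _ \<Rightarrow> 2"
  assume "\<not> ?thesis"
  hence van: "\<And>x. x \<in> PiE Zs ?L \<Longrightarrow> (\<Prod>f\<in>E0. \<Sum>z\<in>Zs. Amat f z * x z) = 0" by blast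
  have supp: "card {j\<in>E0. lam z j \<noteq> 0} \<le> ?bnd z" if "z \<in> Zs" for z
  proof (cases z)
    case (Inl w) thus ?thesis using supp_Inl[of w] by simp
  next
    case (Inr g) thus ?thesis using supp_Inr[of g] by simp
  qed
  have L: "finite (?L z) \<and> Suc (?bnd z) \<le> card (?L z)" if "z \<in> Zs" for z
  proof (cases z)
    case (Inl w)
    hence w: "w \<in> V0" using that by (auto simp: Zs_def)
    have "card (real ` Lv w) = card (Lv w)" by (rule card_image) (simp add: inj_on_def)
    thus ?thesis using Inl Lv[OF w] by simp
  next
    case (Inr g)
    hence g: "g \<in> E0" using that by (auto simp: Zs_def)
    have "card (real ` Le g) = card (Le g)" by (rule card_image) (simp add: inj_on_def)
    thus ?thesis using Inr Le[OF g] by simp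
  qed
  have "(\<Sum>\<pi>\<in>{\<pi>. \<pi> permutes E0}. \<Prod>r\<in>E0. \<Sum>z\<in>Zs. Amat r z * lam z (\<pi> r)) = 0"
    by (rule perm_chain[OF finE finZ supp L van]) auto
  hence "(\<Sum>\<pi>\<in>{\<pi>. \<pi> permutes E0}. \<Prod>f\<in>E0. Mm f (\<pi> f)) = 0" by (simp add: Mm_def)
  thus False using per_pos by simp
qed

lemma Y_val:
  assumes w: "w \<in> V0"
  shows "(\<Sum>z\<in>Zs. pot z w * x z) = x (Inl w) + (\<Sum>g\<in>{g\<in>E0. w \<in> g}. x (Inr g))"
  by (rule sum_pot[OF w])

lemma row_val:
  assumes f: "f \<in> E0"
  shows "(\<Sum>z\<in>Zs. Amat f z * x z) =
     (x (Inl (hi f)) + (\<Sum>g\<in>{g\<in>E0. hi f \<in> g}. x (Inr g))) - (x (Inl (lo f)) + (\<Sum>g\<in>{g\<in>E0. lo f \<in> g}. x (Inr g)))"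
proof -
  have "(\<Sum>z\<in>Zs. Amat f z * x z) = (\<Sum>z\<in>Zs. pot z (hi f) * x z) - (\<Sum>z\<in>Zs. pot z (lo f) * x z)"
    unfolding Amat_def by (simp add: left_diff_distrib sum_subtractf)
  thus ?thesis using Y_val edge_lohi[OF f] by simp
qed

end

lemma finite_thm:
  fixes V0 :: "'a set" and E0 :: "'a set set" and Lv :: "'a \<Rightarrow> nat set" and Le :: "'a set \<Rightarrow> nat set"
  assumes finV: "finite V0" and finE: "finite E0"
    and edges: "\<And>e. e \<in> E0 \<Longrightarrow> \<exists>u v. u \<in> V0 \<and> v \<in> V0 \<and> u \<noteq> v \<and> e = {u, v}"
    and Lv: "\<And>v. v \<in> V0 \<Longrightarrow> finite (Lv v) \<and> 2 \<le> card (Lv v)"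
    and Le: "\<And>e. e \<in> E0 \<Longrightarrow> finite (Le e) \<and> 3 \<le> card (Le e)"
  shows "\<exists>wv we. (\<forall>v\<in>V0. wv v \<in> Lv v) \<and> (\<forall>e\<in>E0. we e \<in> Le e) \<and>
     (\<forall>e\<in>E0. \<forall>u v. e = {u, v} \<longrightarrow> u \<noteq> v \<longrightarrow>
        (\<Sum>g\<in>{g\<in>E0. u \<in> g}. we g) + wv u \<noteq> (\<Sum>g\<in>{g\<in>E0. v \<in> g}. we g) + wv v)"
proof -
  obtain ord :: "'a \<Rightarrow> nat" and n where "ord ` V0 = {i. i < n}" "inj_on ord V0"
    using finite_imp_inj_to_nat_seg[OF finV] by blast
  then interpret G: fgraph V0 E0 ord using finV finE edges by unfold_locales auto
  obtain x where x: "x \<in> PiE G.Zs (\<lambda>z. case z of Inl v \<Rightarrow> real ` Lv v | Inr e \<Rightarrow> real ` Le e)"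
      and nz: "(\<Prod>f\<in>E0. \<Sum>z\<in>G.Zs. G.Amat f z * x z) \<noteq> 0"
    using G.exists_point[of Lv Le, OF Lv Le] by blast
  define wv where "wv v = nat \<lfloor>x (Inl v)\<rfloor>" for v
  define we where "we e = nat \<lfloor>x (Inr e)\<rfloor>" for e
  have xv: "x (Inl v) = real (wv v) \<and> wv v \<in> Lv v" if v: "v \<in> V0" for v
  proof -
    have "Inl v \<in> G.Zs" using v by (simp add: G.Zs_def)
    hence "x (Inl v) \<in> real ` Lv v" using x by (auto simp: PiE_def Pi_def)
    then obtain k where "k \<in> Lv v" "x (Inl v) = real k" by blast
    thus ?thesis by (simp add: wv_def)
  qed
  have xe: "x (Inr e) = real (we e) \<and> we e \<in> Le e" if e: "e \<in> E0" for e
  proof -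
    have "Inr e \<in> G.Zs" using e by (simp add: G.Zs_def)
    hence "x (Inr e) \<in> real ` Le e" using x by (auto simp: PiE_def Pi_def)
    then obtain k where "k \<in> Le e" "x (Inr e) = real k" by blast
    thus ?thesis by (simp add: we_def)
  qed
  have Yr: "x (Inl w) + (\<Sum>g\<in>{g\<in>E0. w \<in> g}. x (Inr g)) = real ((\<Sum>g\<in>{g\<in>E0. w \<in> g}. we g) + wv w)"
    if w: "w \<in> V0" for w
  proof -
    have "(\<Sum>g\<in>{g\<in>E0. w \<in> g}. x (Inr g)) = (\<Sum>g\<in>{g\<in>E0. w \<in> g}. real (we g))"
      using xe by (intro sum.cong refl) auto
    thus ?thesis using xv[OF w] by simp
  qed
  have propr: "(\<Sum>g\<in>{g\<in>E0. u \<in> g}. we g) + wv u \<noteq> (\<Sum>g\<in>{g\<in>E0. v \<in> g}. we g) + wv v"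
    if e: "e \<in> E0" and uv: "e = {u, v}" "u \<noteq> v" for e u v
  proof -
    have "(\<Sum>z\<in>G.Zs. G.Amat e z * x z) \<noteq> 0" using nz e finE by (auto simp: prod_zero_iff)
    hence ne: "real ((\<Sum>g\<in>{g\<in>E0. G.hi e \<in> g}. we g) + wv (G.hi e)) \<noteq>
               real ((\<Sum>g\<in>{g\<in>E0. G.lo e \<in> g}. we g) + wv (G.lo e))"
      using G.row_val[OF e, of x] Yr G.edge_lohi[OF e] by simp
    have ne': "(\<Sum>g\<in>{g\<in>E0. G.hi e \<in> g}. we g) + wv (G.hi e) \<noteq>
               (\<Sum>g\<in>{g\<in>E0. G.lo e \<in> g}. we g) + wv (G.lo e)"
    proof
      assume "(\<Sum>g\<in>{g\<in>E0. G.hi e \<in> g}. we g) + wv (G.hi e) =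
               (\<Sum>g\<in>{g\<in>E0. G.lo e \<in> g}. we g) + wv (G.lo e)"
      hence "real ((\<Sum>g\<in>{g\<in>E0. G.hi e \<in> g}. we g) + wv (G.hi e)) =
               real ((\<Sum>g\<in>{g\<in>E0. G.lo e \<in> g}. we g) + wv (G.lo e))" by (rule arg_cong)
      with ne show False by contradiction
    qed
    have lh: "G.lo e \<in> e" "G.hi e \<in> e" "G.lo e \<noteq> G.hi e" using G.edge_lohi[OF e] by auto
    have mem: "\<And>y. y \<in> e \<longleftrightarrow> y = u \<or> y = v" using uv(1) by simp
    have ne2: "(\<Sum>g\<in>{g\<in>E0. G.lo e \<in> g}. we g) + wv (G.lo e) \<noteq>
               (\<Sum>g\<in>{g\<in>E0. G.hi e \<in> g}. we g) + wv (G.hi e)" using ne' by (rule not_sym)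
    have l1: "G.lo e = u \<or> G.lo e = v" using lh(1) mem by blast
    have h1: "G.hi e = u \<or> G.hi e = v" using lh(2) mem by blast
    show ?thesis
    proof (cases "G.lo e = u")
      case True
      hence "G.hi e = v" using h1 lh(3) by auto
      thus ?thesis using ne2 True by simp
    next
      case False
      hence "G.lo e = v" "G.hi e = u" using l1 h1 lh(3) by auto
      thus ?thesis using ne' by simp
    qed
  qed
  show ?thesis using xv xe propr by blast
qed

lemma compactness_fin:
  fixes D :: "'z \<Rightarrow> 'v set" and I :: "'z set" and Cs :: "'c set"
    and J :: "'c \<Rightarrow> 'z set" and P :: "'c \<Rightarrow> ('z \<Rightarrow> 'v) \<Rightarrow> bool"
  assumes finD: "\<And>z. z \<in> I \<Longrightarrow> finite (D z)"
    and finJ: "\<And>c. c \<in> Cs \<Longrightarrow> finite (J c) \<and> J c \<subseteq> I"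
    and loc: "\<And>c x y. c \<in> Cs \<Longrightarrow> (\<And>z. z \<in> J c \<Longrightarrow> x z = y z) \<Longrightarrow> P c x = P c y"
    and fsat: "\<And>F. finite F \<Longrightarrow> F \<subseteq> Cs \<Longrightarrow> \<exists>x\<in>PiE I D. \<forall>c\<in>F. P c x"
  shows "\<exists>x\<in>PiE I D. \<forall>c\<in>Cs. P c x"
proof -
  define X where "X = product_topology (\<lambda>z. discrete_topology (D z)) I"
  have top: "topspace X = PiE I D" by (simp add: X_def)
  have cX: "compact_space X"
    unfolding X_def compact_space_product_topology using finD
    by (simp add: compact_space_discrete_topology)
  define K where "K c = {x \<in> topspace X. P c x}" for c
  have cyl: "closedin X {x \<in> topspace X. x z = b}" if z: "z \<in> I" for z b
  proof -
    have "closedin X {x \<in> topspace X. x z \<in> {b} \<inter> D z}"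
      by (rule closedin_continuous_map_preimage[where Y = "discrete_topology (D z)"])
         (auto simp: X_def intro: continuous_map_product_projection z)
    moreover have "{x \<in> topspace X. x z \<in> {b} \<inter> D z} = {x \<in> topspace X. x z = b}"
      using z top by (auto simp: PiE_def Pi_def)
    ultimately show ?thesis by simp
  qed
  have closedK: "closedin X (K c)" if c: "c \<in> Cs" for c
  proof -
    define A where "A = (\<lambda>x. restrict x (J c)) ` K c"
    have finA: "finite A"
    proof -
      have "A \<subseteq> PiE (J c) D" unfolding A_def K_def using top finJ[OF c] by (auto simp: PiE_def Pi_def)
      moreover have "finite (PiE (J c) D)" using finJ[OF c] finD by (intro finite_PiE) auto
      ultimately show ?thesis by (rule finite_subset)
    qed
    define Cyl where "Cyl a = \<Inter> (insert (topspace X) ((\<lambda>z. {x \<in> topspace X. x z = a z}) ` J c))" for a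
    have cC: "closedin X (Cyl a)" for a
      unfolding Cyl_def using cyl finJ[OF c] by (intro closedin_Inter) auto
    have "K c = \<Union> (Cyl ` A)"
    proof (intro set_eqI iffI)
      fix x assume x: "x \<in> K c"
      hence "restrict x (J c) \<in> A" by (simp add: A_def)
      moreover have "x \<in> Cyl (restrict x (J c))" using x unfolding Cyl_def K_def by auto
      ultimately show "x \<in> \<Union> (Cyl ` A)" by blast
    next
      fix x assume "x \<in> \<Union> (Cyl ` A)"
      then obtain y where y: "y \<in> K c" "x \<in> Cyl (restrict y (J c))" unfolding A_def by blast
      hence xt: "x \<in> topspace X" and agree: "\<And>z. z \<in> J c \<Longrightarrow> x z = y z"
        unfolding Cyl_def by auto
      have "P c x = P c y" by (rule loc[OF c]) (simp add: agree)
      thus "x \<in> K c" using y xt unfolding K_def by auto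
    qed
    thus ?thesis using cC finA by (auto intro: closedin_Union)
  qed
  let ?U = "insert (topspace X) (K ` Cs)"
  have "\<Inter> ?U \<noteq> {}"
  proof (rule compact_space_fip[THEN iffD1, OF cX, rule_format], intro conjI allI impI ballI)
    fix C assume "C \<in> ?U" thus "closedin X C" using closedK by auto
  next
    fix F assume F: "finite F \<and> F \<subseteq> ?U"
    have fin: "finite (F - {topspace X})" using F by simp
    have sub: "F - {topspace X} \<subseteq> K ` Cs" using F by blast
    obtain F' where F': "F' \<subseteq> Cs" "finite F'" "F - {topspace X} = K ` F'"
      using finite_subset_image[OF fin sub] by blast
    obtain x where x: "x \<in> PiE I D" "\<forall>c\<in>F'. P c x" using fsat[OF F'(2,1)] by blast
    have "x \<in> S" if S: "S \<in> F" for S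
    proof (cases "S = topspace X")
      case True thus ?thesis using x(1) top by simp
    next
      case False
      hence "S \<in> K ` F'" using S F'(3) by blast
      then obtain c where c: "c \<in> F'" "S = K c" by blast
      thus ?thesis using x top unfolding K_def by simp
    qed
    thus "\<Inter> F \<noteq> {}" by blast
  qed
  then obtain x where "x \<in> \<Inter> ?U" by blast
  hence x1: "x \<in> topspace X" and x2: "\<And>c. c \<in> Cs \<Longrightarrow> x \<in> K c" by blast+
  have "\<forall>c\<in>Cs. P c x" using x2 unfolding K_def by blast
  thus ?thesis using x1 top by blast
qed

lemma sg_edge:
  assumes sg: "simple_graph V E" and e: "{u, v} \<in> E"
  shows "u \<in> V \<and> v \<in> V \<and> u \<noteq> v"
proof -
  obtain a b where ab: "a \<in> V" "b \<in> V" "a \<noteq> b" "{u, v} = {a, b}"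
    using sg e unfolding simple_graph_def by blast
  have "u \<in> {a, b}" "v \<in> {a, b}" using ab(4) by (metis insertI1, metis insertI1 insert_commute)
  moreover have "u \<noteq> v"
  proof
    assume "u = v"
    hence "{a, b} = {u}" using ab(4) by simp
    thus False using ab(3) by (metis insertI1 insert_commute singletonD)
  qed
  ultimately show ?thesis using ab by auto
qed

lemma sg_obtain:
  assumes "simple_graph V E" "e \<in> E"
  obtains a b where "a \<in> V" "b \<in> V" "a \<noteq> b" "e = {a, b}"
  using assms unfolding simple_graph_def by blast

lemma star_eq:
  assumes sg: "simple_graph V E"
  shows "{g\<in>E. v \<in> g} = (\<lambda>w. {v, w}) ` nbhd E v" and "inj_on (\<lambda>w. {v, w}) (nbhd E v)"
proof -
  show "{g\<in>E. v \<in> g} = (\<lambda>w. {v, w}) ` nbhd E v"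
  proof (intro set_eqI iffI)
    fix g assume g: "g \<in> {g\<in>E. v \<in> g}"
    obtain a b where ab: "a \<in> V" "b \<in> V" "a \<noteq> b" "g = {a, b}" using sg g unfolding simple_graph_def by blast
    have "v = a \<or> v = b" using g ab(4) by blast
    hence "\<exists>w. g = {v, w}" using ab(4) by (metis insert_commute)
    then obtain w where w: "g = {v, w}" by blast
    hence "w \<in> nbhd E v" using g unfolding nbhd_def by auto
    thus "g \<in> (\<lambda>w. {v, w}) ` nbhd E v" using w by blast
  next
    fix g assume "g \<in> (\<lambda>w. {v, w}) ` nbhd E v"
    then obtain w where "w \<in> nbhd E v" "g = {v, w}" by blast
    thus "g \<in> {g\<in>E. v \<in> g}" unfolding nbhd_def by auto
  qed
  show "inj_on (\<lambda>w. {v, w}) (nbhd E v)"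
  proof (rule inj_onI)
    fix w w' assume w: "w \<in> nbhd E v" "w' \<in> nbhd E v" "{v, w} = {v, w'}"
    have "v \<noteq> w" "v \<noteq> w'" using sg_edge[OF sg] w(1,2) unfolding nbhd_def by blast+
    thus "w = w'" using w(3) by (metis doubleton_eq_iff)
  qed
qed

lemma star_sum:
  assumes sg: "simple_graph V E"
  shows "(\<Sum>w\<in>nbhd E v. we {v, w}) = (\<Sum>g\<in>{g\<in>E. v \<in> g}. we g)"
  using sum.reindex[OF star_eq(2)[OF sg], of we v] star_eq(1)[OF sg, of v] by (simp add: o_def)

lemma star_finite:
  assumes sg: "simple_graph V E" and f: "finite (nbhd E v)"
  shows "finite {g\<in>E. v \<in> g}"
  using star_eq(1)[OF sg, of v] f by simp

theorem theorem4:
  fixes V :: "'a set" and E :: "'a set set"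
    and Lv :: "'a \<Rightarrow> nat set" and Le :: "'a set \<Rightarrow> nat set"
  assumes "simple_graph V E"
    and "\<forall>v\<in>V. finite (Lv v) \<and> (\<forall>x\<in>Lv v. 0 < x) \<and> card (Lv v) \<ge> 2"
    and "\<forall>e\<in>E. finite (Le e) \<and> (\<forall>x\<in>Le e. 0 < x) \<and> card (Le e) \<ge> 3"
  shows "\<exists>wv we. is_L_weighting V E Lv Le wv we"
proof -
  note sg = assms(1)
  have LvP: "\<And>v. v \<in> V \<Longrightarrow> finite (Lv v) \<and> 2 \<le> card (Lv v)" using assms(2) by blast
  have LeP: "\<And>e. e \<in> E \<Longrightarrow> finite (Le e) \<and> 3 \<le> card (Le e)" using assms(3) by blast
  define Fin where "Fin = {v\<in>V. finite (nbhd E v)}"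
  define I where "I = Inl ` V \<union> Inr ` E"
  define D where "D z = (case z of Inl v \<Rightarrow> Lv v | Inr e \<Rightarrow> Le e)" for z
  define Cs where "Cs = {(u, v). {u, v} \<in> E \<and> u \<in> Fin \<and> v \<in> Fin}"
  define J where "J c = {Inl (fst c), Inl (snd c)} \<union> Inr ` {g\<in>E. fst c \<in> g \<or> snd c \<in> g}" for c :: "'a \<times> 'a"
  define st where "st x w = (\<Sum>g\<in>{g\<in>E. w \<in> g}. x (Inr g)) + x (Inl w)" for x :: "'a + 'a set \<Rightarrow> nat" and w
  define P where "P c x = (st x (fst c) \<noteq> st x (snd c))" for c :: "'a \<times> 'a" and x
  have nonempty: "\<exists>a. a \<in> D z" if "z \<in> I" for z
  proof (cases z)
    case (Inl v)
    hence "v \<in> V" using that by (auto simp: I_def)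
    hence "Lv v \<noteq> {}" using LvP[of v] by auto
    thus ?thesis using Inl by (auto simp: D_def)
  next
    case (Inr e)
    hence "e \<in> E" using that by (auto simp: I_def)
    hence "Le e \<noteq> {}" using LeP[of e] by auto
    thus ?thesis using Inr by (auto simp: D_def)
  qed
  have finD: "\<And>z. z \<in> I \<Longrightarrow> finite (D z)"
    using LvP LeP by (auto simp: I_def D_def)
  have Cs_mem: "u \<in> Fin \<and> v \<in> Fin \<and> {u, v} \<in> E" if "(u, v) \<in> Cs" for u v
    using that by (simp add: Cs_def)
  have finJ: "finite (J c) \<and> J c \<subseteq> I" if c: "c \<in> Cs" for c
  proof -
    obtain u v where uv: "c = (u, v)" by (cases c)
    have m: "u \<in> Fin" "v \<in> Fin" "{u, v} \<in> E" using Cs_mem c uv by auto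
    have fu: "finite {g\<in>E. u \<in> g}" "finite {g\<in>E. v \<in> g}"
      using star_finite[OF sg] m(1,2) by (auto simp: Fin_def)
    have "{g\<in>E. u \<in> g \<or> v \<in> g} = {g\<in>E. u \<in> g} \<union> {g\<in>E. v \<in> g}" by auto
    hence "finite {g\<in>E. u \<in> g \<or> v \<in> g}" using fu by simp
    moreover have "u \<in> V" "v \<in> V" using m(1,2) by (auto simp: Fin_def)
    ultimately show ?thesis using uv by (auto simp: J_def I_def)
  qed
  have loc: "P c x = P c y" if c: "c \<in> Cs" and agree: "\<And>z. z \<in> J c \<Longrightarrow> x z = y z" for c x y
  proof -
    have "st x w = st y w" if w: "w = fst c \<or> w = snd c" for w
    proof -
      have "(\<Sum>g\<in>{g\<in>E. w \<in> g}. x (Inr g)) = (\<Sum>g\<in>{g\<in>E. w \<in> g}. y (Inr g))"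
        using agree w by (intro sum.cong refl) (auto simp: J_def)
      moreover have "x (Inl w) = y (Inl w)" using agree w by (auto simp: J_def)
      ultimately show ?thesis by (simp add: st_def)
    qed
    thus ?thesis by (simp add: P_def)
  qed
  have fsat: "\<exists>x\<in>PiE I D. \<forall>c\<in>F. P c x" if F: "finite F" "F \<subseteq> Cs" for F
  proof -
    define S where "S = fst ` F \<union> snd ` F"
    have finS: "finite S" using F by (simp add: S_def)
    have SFin: "S \<subseteq> Fin" using F(2) Cs_mem unfolding S_def by fastforce
    define E0 where "E0 = {g\<in>E. \<exists>s\<in>S. s \<in> g}"
    have "E0 = (\<Union>s\<in>S. {g\<in>E. s \<in> g})" unfolding E0_def by auto
    hence finE0: "finite E0" using finS SFin star_finite[OF sg] by (auto simp: Fin_def)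
    define V0 where "V0 = \<Union> E0 \<union> S"
    have E0E: "E0 \<subseteq> E" by (auto simp: E0_def)
    have edges0: "\<exists>u v. u \<in> V0 \<and> v \<in> V0 \<and> u \<noteq> v \<and> e = {u, v}" if e: "e \<in> E0" for e
    proof -
      have eE: "e \<in> E" using e E0E by blast
      obtain a b where ab: "a \<in> V" "b \<in> V" "a \<noteq> b" "e = {a, b}"
        by (rule sg_obtain[OF sg eE])
      have "a \<in> e" "b \<in> e" unfolding ab(4) by simp_all
      hence "a \<in> V0" "b \<in> V0" using e unfolding V0_def by blast+
      thus ?thesis using ab(3,4) by (intro exI[of _ a] exI[of _ b]) simp
    qed
    have finV0: "finite V0"
    proof -
      have "finite e" if e: "e \<in> E0" for e
      proof -
        from edges0[OF e] obtain u v where "e = {u, v}" by (elim exE conjE)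
        thus ?thesis by simp
      qed
      thus ?thesis using finE0 finS by (simp add: V0_def)
    qed
    have V0V: "V0 \<subseteq> V"
    proof
      fix w assume w: "w \<in> V0"
      show "w \<in> V"
      proof (cases "w \<in> S")
        case True thus ?thesis using SFin unfolding Fin_def by blast
      next
        case False
        hence "w \<in> \<Union> E0" using w unfolding V0_def by blast
        then obtain e where e: "e \<in> E0" "w \<in> e" by blast
        have eE: "e \<in> E" using e(1) E0E by blast
        obtain a b where ab: "a \<in> V" "b \<in> V" "a \<noteq> b" "e = {a, b}"
          by (rule sg_obtain[OF sg eE])
        have "w \<in> {a, b}" using e(2) unfolding ab(4) .
        hence "w = a \<or> w = b" by simp
        thus ?thesis using ab(1,2) by blast
      qed
    qed
    obtain wv we where w: "\<forall>v\<in>V0. wv v \<in> Lv v" "\<forall>e\<in>E0. we e \<in> Le e"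
      "\<forall>e\<in>E0. \<forall>u v. e = {u, v} \<longrightarrow> u \<noteq> v \<longrightarrow>
        (\<Sum>g\<in>{g\<in>E0. u \<in> g}. we g) + wv u \<noteq> (\<Sum>g\<in>{g\<in>E0. v \<in> g}. we g) + wv v"
    proof -
      have LvP0: "\<And>v. v \<in> V0 \<Longrightarrow> finite (Lv v) \<and> 2 \<le> card (Lv v)" using LvP V0V by blast
      have LeP0: "\<And>e. e \<in> E0 \<Longrightarrow> finite (Le e) \<and> 3 \<le> card (Le e)" using LeP E0E by blast
      show ?thesis using finite_thm[of V0 E0 Lv Le, OF finV0 finE0 edges0 LvP0 LeP0] that by blast
    qed
    define x where "x = restrict (\<lambda>z. case z of Inl v \<Rightarrow> if v \<in> V0 then wv v else (SOME a. a \<in> D z)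
                           | Inr e \<Rightarrow> if e \<in> E0 then we e else (SOME a. a \<in> D z)) I"
    have xI: "x \<in> PiE I D"
    proof (rule PiE_I)
      fix z assume z: "z \<in> I"
      show "x z \<in> D z"
      proof (cases z)
        case (Inl v)
        show ?thesis using w(1) Inl z someI_ex[OF nonempty[OF z]] by (auto simp: x_def D_def)
      next
        case (Inr e)
        show ?thesis using w(2) Inr z someI_ex[OF nonempty[OF z]] by (auto simp: x_def D_def)
      qed
    next
      fix z assume "z \<notin> I" thus "x z = undefined" by (simp add: x_def)
    qed
    have "P c x" if c: "c \<in> F" for c
    proof -
      obtain u v where uv: "c = (u, v)" by (cases c)
      have uS: "u \<in> S" "v \<in> S" using c uv unfolding S_def by force+
      have m: "{u, v} \<in> E" using Cs_mem F(2) c uv by blast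
      have uvne: "u \<noteq> v" using sg_edge[OF sg m] by blast
      have e0: "{u, v} \<in> E0" using m uS unfolding E0_def by blast
      have stv: "st x w = (\<Sum>g\<in>{g\<in>E0. w \<in> g}. we g) + wv w" if wS: "w \<in> S" for w
      proof -
        have eq: "{g\<in>E. w \<in> g} = {g\<in>E0. w \<in> g}" using wS unfolding E0_def by blast
        have "(\<Sum>g\<in>{g\<in>E. w \<in> g}. x (Inr g)) = (\<Sum>g\<in>{g\<in>E0. w \<in> g}. we g)"
          unfolding eq using E0E by (intro sum.cong refl) (auto simp: x_def I_def)
        moreover have "x (Inl w) = wv w" using wS V0V by (auto simp: x_def I_def V0_def)
        ultimately show ?thesis by (simp add: st_def)
      qed
      have "(\<Sum>g\<in>{g\<in>E0. u \<in> g}. we g) + wv u \<noteq> (\<Sum>g\<in>{g\<in>E0. v \<in> g}. we g) + wv v"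
        using w(3) e0 uvne by blast
      thus ?thesis using stv uS uv by (simp add: P_def)
    qed
    thus ?thesis using xI by blast
  qed
  obtain x where x: "x \<in> PiE I D" "\<forall>c\<in>Cs. P c x"
    using compactness_fin[of I D Cs J P, OF finD finJ loc fsat] by blast
  define wv where "wv v = x (Inl v)" for v
  define we where "we e = x (Inr e)" for e
  have "is_L_weighting V E Lv Le wv we"
    unfolding is_L_weighting_def
  proof (intro conjI ballI allI impI)
    fix v assume "v \<in> V"
    hence "Inl v \<in> I" by (simp add: I_def)
    thus "wv v \<in> Lv v" using x(1) by (auto simp: wv_def D_def PiE_def Pi_def)
  next
    fix e assume "e \<in> E"
    hence "Inr e \<in> I" by (simp add: I_def)
    thus "we e \<in> Le e" using x(1) by (auto simp: we_def D_def PiE_def Pi_def)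
  next
    fix u v assume e: "{u, v} \<in> E"
    have uvV: "u \<in> V" "v \<in> V" using sg_edge[OF sg e] by auto
    show "wdeg_differ E wv we u v \<or> same_infinite_degree E u v"
    proof (cases "finite (nbhd E u) \<and> finite (nbhd E v)")
      case True
      hence "(u, v) \<in> Cs" using e uvV by (simp add: Cs_def Fin_def)
      hence Pc: "P (u, v) x" using x(2) by blast
      have "wdeg_fin E wv we w = st x w" for w
        unfolding wdeg_fin_def st_def wv_def we_def using star_sum[OF sg, of "\<lambda>g. x (Inr g)" w] by simp
      hence "wdeg_fin E wv we u \<noteq> wdeg_fin E wv we v" using Pc by (simp add: P_def)
      thus ?thesis using True by (simp add: wdeg_differ_def)
    next
      case False
      thus ?thesis by (auto simp: wdeg_differ_def same_infinite_degree_def)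
    qed
  qed
  thus ?thesis by blast
qed

end
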